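(* Let $0<\alpha<\beta<1$ and let $t\geq 1$ be an integer. Let $\mathcal{P}_t'$ denote the set of real polynomials $f$ of degree at most $t$ satisfying $f(0)=0$ and $f(1)=1$. Then the minimization problem \[ \min_{f\in\mathcal{P}_t'} \frac{\max_{\lambda\in[0,\alpha]}|f(\lambda)|}{\min_{\lambda\in[\beta,1]}|f(\lambda)|} \] is solved by \[ f_t^\star(\lambda)=\prod_{s=0}^{t-1}\frac{\lambda-r_{s,t}}{1-r_{s,t}},\qquad r_{s,t}:=\alpha\,\frac{\cos\!\big(\frac{\pi(s+1/2)}{t}\big)+\cos\!\big(\frac{\pi}{2t}\big)}{1+\cos\!\big(\frac{\pi}{2t}\big)} . \]
   Context: The objective is taken to be $+\infty$ when the denominator vanishes. The polynomial $f_t^\star$ is an affinely reparametrized Chebyshev polynomial of the first kind of degree $t$; note $r_{t-1,t}=0$. *)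

theory Defs
  imports "HOL-Analysis.Analysis" "HOL-Computational_Algebra.Polynomial"
begin

definition Pt' :: "nat \<Rightarrow> real poly set" where
  "Pt' t = {f. degree f \<le> t \<and> poly f 0 = 0 \<and> poly f 1 = 1}"

text \<open>Max/min of a continuous function on a compact interval are
  written as Sup/Inf of the image (they are attained).\<close>
definition ratio_obj :: "real \<Rightarrow> real \<Rightarrow> real poly \<Rightarrow> ereal" where
  "ratio_obj \<alpha> \<beta> f =
     (let M = Sup ((\<lambda>x. \<bar>poly f x\<bar>) ` {0..\<alpha>});
          m = Inf ((\<lambda>x. \<bar>poly f x\<bar>) ` {\<beta>..1})
      in if m = 0 then PInfty else ereal (M / m))"

definition cheb_root :: "real \<Rightarrow> nat \<Rightarrow> nat \<Rightarrow> real" where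
  "cheb_root \<alpha> s t =
     \<alpha> * (cos (pi * (real s + 1/2) / real t) + cos (pi / (2 * real t)))
       / (1 + cos (pi / (2 * real t)))"

definition fstar :: "real \<Rightarrow> nat \<Rightarrow> real poly" where
  "fstar \<alpha> t = (\<Prod>s<t. smult (1 / (1 - cheb_root \<alpha> s t)) [:- cheb_root \<alpha> s t, 1:])"

end

theory Submission imports Defs begin

fun cheb :: "nat \<Rightarrow> real poly" where
  "cheb 0 = 1"
| "cheb (Suc 0) = [:0,1:]"
| "cheb (Suc (Suc n)) = pCons 0 (smult 2 (cheb (Suc n))) - cheb n"

lemma cheb_cos: "poly (cheb n) (cos x) = cos (real n * x)"
proof (induction n rule: cheb.induct)
  case (3 n)
  have "cos (real (Suc (Suc n)) * x) = cos (real (Suc n) * x + x)"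
    by (simp add: algebra_simps)
  also have "\<dots> = 2 * cos x * cos (real (Suc n) * x) - cos (real n * x)"
  proof -
    have e: "real n * x = real (Suc n) * x - x" by (simp add: algebra_simps)
    show ?thesis unfolding e cos_add cos_diff by (simp add: algebra_simps)
  qed
  finally show ?case using 3 by simp
qed simp_all

lemma cheb_deg: "degree (cheb n) \<le> n \<and> coeff (cheb n) n = (if n = 0 then 1 else 2^(n-1))"
proof (induction n rule: cheb.induct)
  case (3 n)
  have d1: "degree (pCons 0 (smult 2 (cheb (Suc n)))) \<le> Suc (Suc n)"
    using 3(1) by (intro order_trans[OF degree_pCons_le]) simp
  have "degree (cheb (Suc (Suc n))) \<le> Suc (Suc n)"
    using d1 3(2) by (simp add: degree_diff_le)
  moreover have "coeff (cheb n) (Suc (Suc n)) = 0"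
    using 3(2) by (intro coeff_eq_0) auto
  ultimately show ?case using 3 by simp
qed simp_all

lemma th_le:
  assumes "a < t" shows "pi * (real a + 1/2) / real t \<le> pi"
proof -
  have "real a + 1/2 \<le> real t" using assms by simp
  then have "pi * (real a + 1/2) \<le> pi * real t" by (intro mult_left_mono) auto
  then show ?thesis using assms by (simp add: divide_le_eq)
qed

lemma cheb_prod:
  assumes "1 \<le> t"
  shows "cheb t = smult (2^(t-1)) (\<Prod>s<t. [:- cos (pi * (real s + 1/2) / real t), 1:])"
    (is "_ = smult _ ?P")
proof (rule poly_eqI_degree_lead_coeff[where n = t and A = "(\<lambda>s. cos (pi * (real s + 1/2) / real t)) ` {..<t}"])
  have dP: "degree ?P = t"
    by (subst degree_prod_eq_sum_degree) auto
  have "coeff ?P t = 1" using dP lead_coeff_prod[of "\<lambda>s. [:- cos (pi * (real s + 1/2) / real t), 1:]" "{..<t}"]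
    by simp
  then show "coeff (cheb t) t = coeff (smult (2^(t-1)) ?P) t" using cheb_deg[of t] assms by simp
  have "inj_on (\<lambda>s. cos (pi * (real s + 1/2) / real t)) {..<t}"
  proof (rule inj_onI)
    fix a b assume a: "a \<in> {..<t}" and b: "b \<in> {..<t}" and e: "cos (pi * (real a + 1/2) / real t) = cos (pi * (real b + 1/2) / real t)"
    have ra: "0 \<le> pi * (real a + 1/2) / real t" "pi * (real a + 1/2) / real t \<le> pi"
      using a assms by (auto intro: th_le)
    have rb: "0 \<le> pi * (real b + 1/2) / real t" "pi * (real b + 1/2) / real t \<le> pi"
      using b assms by (auto intro: th_le)
    have "pi * (real a + 1/2) / real t = pi * (real b + 1/2) / real t"
      using cos_inj_pi[OF ra rb e] .
    then show "a = b" using assms by (simp add: field_simps)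
  qed
  then show "card ((\<lambda>s. cos (pi * (real s + 1/2) / real t)) ` {..<t}) \<ge> t"
    by (simp add: card_image)
  show "degree (cheb t) \<le> t" using cheb_deg by blast
  show "degree (smult (2^(t-1)) ?P) \<le> t" using dP by simp
  fix z assume "z \<in> (\<lambda>s. cos (pi * (real s + 1/2) / real t)) ` {..<t}"
  then obtain s where s: "s < t" "z = cos (pi * (real s + 1/2) / real t)" by auto
  have "poly (cheb t) z = cos (real t * (pi * (real s + 1/2) / real t))" using s cheb_cos by simp
  also have "real t * (pi * (real s + 1/2) / real t) = real s * pi + pi/2"
    using assms by (simp add: field_simps)
  hence "cos (real t * (pi * (real s + 1/2) / real t)) = cos (real s * pi + pi/2)" by simp
  also have "\<dots> = 0" by (simp add: cos_add)
  finally have "poly (cheb t) z = 0" .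
  moreover have "poly ?P z = 0" using s by (auto simp: poly_prod)
  ultimately show "poly (cheb t) z = poly (smult (2^(t-1)) ?P) z" by simp
qed


lemma cheb_prod_cos:
  assumes "1 \<le> t" "-1 \<le> x" "x \<le> 1"
  shows "(\<Prod>s<t. (x - cos (pi * (real s + 1/2) / real t))) = cos (real t * arccos x) / 2^(t-1)"
proof -
  have "cos (real t * arccos x) = poly (cheb t) (cos (arccos x))" by (simp add: cheb_cos)
  also have "\<dots> = poly (cheb t) x" using assms by simp
  also have "\<dots> = 2^(t-1) * (\<Prod>s<t. (x - cos (pi * (real s + 1/2) / real t)))"
    by (subst cheb_prod[OF assms(1)]) (simp add: poly_prod)
  finally show ?thesis by simp
qed


definition cc :: "nat \<Rightarrow> real" where "cc t = cos (pi / (2 * real t))"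
definition GG :: "real \<Rightarrow> nat \<Rightarrow> real \<Rightarrow> real" where
  "GG \<alpha> t l = (\<Prod>s<t. (l - cheb_root \<alpha> s t))"
definition AA :: "real \<Rightarrow> nat \<Rightarrow> real" where
  "AA \<alpha> t = (\<alpha> / (1 + cc t))^t / 2^(t-1)"
definition lam :: "real \<Rightarrow> nat \<Rightarrow> nat \<Rightarrow> real" where
  "lam \<alpha> t k = \<alpha> * (cos (real k * pi / real t) + cc t) / (1 + cc t)"

lemma cc_bounds: assumes "1 \<le> t" shows "0 \<le> cc t" "cc t \<le> 1"
proof -
  have "pi / (2 * real t) \<le> pi / 2" using assms by (intro divide_left_mono) auto
  moreover have "0 \<le> pi / (2 * real t)" by simp
  ultimately show "0 \<le> cc t" unfolding cc_def using cos_ge_zero[of "pi / (2 * real t)"] by linarith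
  show "cc t \<le> 1" unfolding cc_def by simp
qed

lemma cc_alt: "cc t = cos (pi / (2 * real t))" by (simp add: cc_def)

lemma root_le:
  assumes "0 < \<alpha>" "1 \<le> t"
  shows "cheb_root \<alpha> s t \<le> \<alpha>"
proof -
  have c: "0 \<le> cc t" using cc_bounds assms by auto
  have "cos (pi * (real s + 1/2) / real t) + cc t \<le> 1 + cc t" by simp
  then have "\<alpha> * (cos (pi * (real s + 1/2) / real t) + cc t) \<le> \<alpha> * (1 + cc t)"
    using assms by (intro mult_left_mono) auto
  then show ?thesis using c unfolding cheb_root_def cc_def[symmetric]
    by (simp add: divide_le_eq)
qed

lemma root_last:
  assumes "1 \<le> t"
  shows "cheb_root \<alpha> (t - 1) t = 0"
proof -
  have "pi * (real (t - 1) + 1/2) / real t = pi - pi / (2 * real t)"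
    using assms by (simp add: field_simps of_nat_diff)
  then show ?thesis unfolding cheb_root_def by simp
qed

lemma fac_eq: assumes "a \<noteq> 0" "1 + c \<noteq> (0::real)" shows
  "l - a * (C + c) / (1 + c) = a / (1 + c) * (((1 + c) * l - c * a) / a - C)"
proof -
  have h: "(1 + c) * l - a * (C + c) = ((1 + c) * l - c * a) - a * C" by (simp add: algebra_simps)
  have e0: "((1 + c) * l - a * (C + c)) / a = ((1 + c) * l - c * a) / a - (a * C) / a"
    unfolding h by (rule diff_divide_distrib)
  have e1: "((1 + c) * l - c * a) / a - C = ((1 + c) * l - a * (C + c)) / a"
    using e0 assms(1) by simp
  have e2: "a / (1 + c) * (((1 + c) * l - a * (C + c)) / a) = ((1 + c) * l - a * (C + c)) / (1 + c)"
    using assms(1) by simp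
  have e3: "((1 + c) * l - a * (C + c)) / (1 + c) = l - a * (C + c) / (1 + c)"
    using assms(2) by (simp add: diff_divide_distrib)
  show ?thesis using e1 e2 e3 by simp
qed
lemma fac_eq2: assumes "a \<noteq> 0" "1 + c \<noteq> (0::real)" shows
  "((1 + c) * (a * (C + c) / (1 + c)) - c * a) / a = C"
proof -
  have "(1 + c) * (a * (C + c) / (1 + c)) = a * (C + c)" using assms by simp
  then have "(1 + c) * (a * (C + c) / (1 + c)) - c * a = a * C" by (simp add: algebra_simps)
  then show ?thesis using assms by simp
qed

lemma GG_eq:
  assumes "0 < \<alpha>" "1 \<le> t"
  shows "GG \<alpha> t l = (\<alpha> / (1 + cc t))^t *
     (\<Prod>s<t. (((1 + cc t) * l - cc t * \<alpha>) / \<alpha> - cos (pi * (real s + 1/2) / real t)))"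
proof -
  have c: "1 + cc t \<noteq> 0" using cc_bounds[OF assms(2)] by auto
  have "GG \<alpha> t l = (\<Prod>s<t. (\<alpha> / (1 + cc t)) *
     (((1 + cc t) * l - cc t * \<alpha>) / \<alpha> - cos (pi * (real s + 1/2) / real t)))"
    unfolding GG_def cheb_root_def cc_def[symmetric]
    by (rule prod.cong) (use c assms fac_eq in auto)
  also have "\<dots> = (\<alpha> / (1 + cc t))^t *
     (\<Prod>s<t. (((1 + cc t) * l - cc t * \<alpha>) / \<alpha> - cos (pi * (real s + 1/2) / real t)))"
    by (subst prod.distrib) simp
  finally show ?thesis .
qed

lemma GG_cos:
  assumes "0 < \<alpha>" "1 \<le> t" "0 \<le> l" "l \<le> \<alpha>"
  shows "GG \<alpha> t l = AA \<alpha> t * cos (real t * arccos (((1 + cc t) * l - cc t * \<alpha>) / \<alpha>))"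
proof -
  note cb = cc_bounds[OF assms(2)]
  define x where "x = ((1 + cc t) * l - cc t * \<alpha>) / \<alpha>"
  have "(1 + cc t) * l - cc t * \<alpha> \<ge> - cc t * \<alpha>" using cb assms by simp
  then have x1: "x \<ge> - cc t" unfolding x_def using assms by (simp add: le_divide_eq)
  have "(1 + cc t) * l \<le> (1 + cc t) * \<alpha>" using cb assms by (intro mult_left_mono) auto
  then have "(1 + cc t) * l - cc t * \<alpha> \<le> \<alpha>" by (simp add: algebra_simps)
  then have x2: "x \<le> 1" unfolding x_def using assms by (simp add: divide_le_eq)
  have "GG \<alpha> t l = (\<alpha> / (1 + cc t))^t * (cos (real t * arccos x) / 2^(t-1))"
    unfolding GG_eq[OF assms(1,2)] x_def[symmetric]
    using cheb_prod_cos[OF assms(2), of x] x1 x2 cb by simp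
  then show ?thesis unfolding AA_def x_def by simp
qed

lemma AA_pos: assumes "0 < \<alpha>" "1 \<le> t" shows "0 < AA \<alpha> t"
  using cc_bounds[OF assms(2)] assms unfolding AA_def by simp

lemma GG_bound:
  assumes "0 < \<alpha>" "1 \<le> t" "0 \<le> l" "l \<le> \<alpha>"
  shows "\<bar>GG \<alpha> t l\<bar> \<le> AA \<alpha> t"
  using GG_cos[OF assms] AA_pos[OF assms(1,2)]
  by (simp add: abs_mult mult_le_cancel_left1)

lemma lam_cos: "0 < \<alpha> \<Longrightarrow> 1 \<le> t \<Longrightarrow>
   ((1 + cc t) * lam \<alpha> t k - cc t * \<alpha>) / \<alpha> = cos (real k * pi / real t)"
  using cc_bounds[of t] unfolding lam_def by (intro fac_eq2) auto

lemma lam_range: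
  assumes "0 < \<alpha>" "1 \<le> t" "k < t"
  shows "0 \<le> lam \<alpha> t k" "lam \<alpha> t k \<le> \<alpha>"
proof -
  note cb = cc_bounds[OF assms(2)]
  have k1: "real k \<le> real t - 1" using assms by linarith
  have "real k * pi / real t \<le> (real t - 1) * pi / real t"
    using k1 assms by (intro divide_right_mono mult_right_mono) auto
  also have "\<dots> = pi - pi / real t" using assms by (simp add: field_simps)
  also have "\<dots> \<le> pi - pi / (2 * real t)" using assms by (simp add: frac_le)
  finally have le: "real k * pi / real t \<le> pi - pi / (2 * real t)" .
  have "pi / (2 * real t) \<ge> 0" by simp
  then have "cos (pi - pi / (2 * real t)) \<le> cos (real k * pi / real t)"
    using le by (intro cos_monotone_0_pi_le) auto
  then have "cos (real k * pi / real t) + cc t \<ge> 0" unfolding cc_def by simp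
  then show "0 \<le> lam \<alpha> t k" unfolding lam_def using assms cb by simp
  have "cos (real k * pi / real t) + cc t \<le> 1 + cc t" by simp
  then have "\<alpha> * (cos (real k * pi / real t) + cc t) \<le> \<alpha> * (1 + cc t)"
    using assms by (intro mult_left_mono) auto
  then show "lam \<alpha> t k \<le> \<alpha>" unfolding lam_def using cb by (simp add: divide_le_eq)
qed

lemma GG_lam:
  assumes "0 < \<alpha>" "1 \<le> t" "k < t"
  shows "GG \<alpha> t (lam \<alpha> t k) = AA \<alpha> t * (-1)^k"
proof -
  have "0 \<le> real k * pi / real t" by simp
  moreover have "real k * pi / real t \<le> pi" using assms by (simp add: divide_le_eq)
  ultimately have "arccos (cos (real k * pi / real t)) = real k * pi / real t" by (rule arccos_cos)
  moreover have "real t * (real k * pi / real t) = real k * pi" using assms by simp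
  ultimately show ?thesis
    using GG_cos[OF assms(1,2) lam_range[OF assms]] lam_cos[OF assms(1,2)] by simp
qed

lemma lam_mono:
  assumes "0 < \<alpha>" "1 \<le> t" "j < k" "k < t"
  shows "lam \<alpha> t k < lam \<alpha> t j"
proof -
  note cb = cc_bounds[OF assms(2)]
  have "real k * pi / real t \<le> pi" using assms by (simp add: divide_le_eq)
  moreover have "real j * pi / real t < real k * pi / real t"
    using assms by (simp add: divide_strict_right_mono)
  ultimately have "cos (real k * pi / real t) < cos (real j * pi / real t)"
    by (intro cos_monotone_0_pi) auto
  then have "\<alpha> * (cos (real k * pi / real t) + cc t) < \<alpha> * (cos (real j * pi / real t) + cc t)"
    using assms by simp
  then show ?thesis unfolding lam_def using cb by (simp add: divide_strict_right_mono)
qed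

lemma lam0: "lam \<alpha> t 0 = \<alpha>" if "1 \<le> t" using cc_bounds[OF that] unfolding lam_def by simp

lemma GG_pos:
  assumes "0 < \<alpha>" "1 \<le> t" "\<alpha> < l"
  shows "0 < GG \<alpha> t l"
  unfolding GG_def
proof (intro prod_pos)
  fix s have "cheb_root \<alpha> s t \<le> \<alpha>" by (rule root_le[OF assms(1,2)])
  then show "0 < l - cheb_root \<alpha> s t" using assms by linarith
qed

lemma GG_mono:
  assumes "0 < \<alpha>" "1 \<le> t" "\<alpha> \<le> l" "l \<le> l'"
  shows "GG \<alpha> t l \<le> GG \<alpha> t l'"
  unfolding GG_def
proof (intro prod_mono)
  fix s have "cheb_root \<alpha> s t \<le> \<alpha>" by (rule root_le[OF assms(1,2)])
  then show "0 \<le> l - cheb_root \<alpha> s t \<and> l - cheb_root \<alpha> s t \<le> l' - cheb_root \<alpha> s t"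
    using assms by linarith
qed

lemma GG_zero: assumes "1 \<le> t" shows "GG \<alpha> t 0 = 0"
  unfolding GG_def using root_last[OF assms] assms
  by (intro prod_zero) (auto intro!: bexI[of _ "t - 1"])


definition GP :: "real \<Rightarrow> nat \<Rightarrow> real poly" where
  "GP \<alpha> t = (\<Prod>s<t. [:- cheb_root \<alpha> s t, 1:])"

lemma poly_GP: "poly (GP \<alpha> t) l = GG \<alpha> t l"
  unfolding GP_def GG_def by (simp add: poly_prod)

lemma degree_GP: "degree (GP \<alpha> t) \<le> t"
proof -
  have "degree (GP \<alpha> t) \<le> (\<Sum>s<t. degree [:- cheb_root \<alpha> s t, 1:])"
    unfolding GP_def using degree_prod_sum_le[of "{..<t}" "\<lambda>s. [:- cheb_root \<alpha> s t, 1:]"]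
    by (simp add: o_def)
  then show ?thesis by simp
qed

lemma sgn_aux:
  fixes x :: real assumes "x = A * s - y" "s * s = 1" shows "s * x = A - s * y"
proof -
  have "s * x = A * (s * s) - s * y" unfolding assms(1) by (simp add: algebra_simps)
  then show ?thesis using assms(2) by simp
qed

lemma key:
  fixes p :: "real poly"
  assumes a: "0 < \<alpha>" "\<alpha> < \<beta>" "1 \<le> t"
    and dp: "degree p \<le> t" and p0: "poly p 0 = 0"
    and bnd: "\<forall>x\<in>{0..\<alpha>}. \<bar>poly p x\<bar> \<le> K"
  shows "\<bar>poly p \<beta>\<bar> * AA \<alpha> t \<le> K * GG \<alpha> t \<beta>"
proof (rule ccontr)
  assume neg: "\<not> ?thesis"
  have Gb: "0 < GG \<alpha> t \<beta>" using GG_pos a by auto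
  have A: "0 < AA \<alpha> t" using AA_pos a by auto
  have K0: "0 \<le> K" using bnd a p0 by force
  have pb: "poly p \<beta> \<noteq> 0" using neg K0 Gb by auto
  define g where "g = smult (GG \<alpha> t \<beta> / poly p \<beta>) p"
  define q where "q = GP \<alpha> t - g"
  have qb: "poly q \<beta> = 0" unfolding q_def g_def using pb by (simp add: poly_GP)
  have q0: "poly q 0 = 0" unfolding q_def g_def using p0 GG_zero a by (simp add: poly_GP)
  have gb: "\<bar>poly g x\<bar> < AA \<alpha> t" if "x \<in> {0..\<alpha>}" for x
  proof -
    have "\<bar>poly g x\<bar> = GG \<alpha> t \<beta> * \<bar>poly p x\<bar> / \<bar>poly p \<beta>\<bar>"
      unfolding g_def using Gb by (simp add: abs_mult)
    also have "\<dots> \<le> GG \<alpha> t \<beta> * K / \<bar>poly p \<beta>\<bar>"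
      using bnd that Gb by (intro divide_right_mono mult_left_mono) auto
    also have "\<dots> < AA \<alpha> t" using neg pb by (simp add: divide_less_eq mult.commute)
    finally show ?thesis .
  qed
  have sgn: "0 < (-1)^k * poly q (lam \<alpha> t k)" if "k < t" for k
  proof -
    have r: "lam \<alpha> t k \<in> {0..\<alpha>}" using lam_range a that by auto
    have "poly q (lam \<alpha> t k) = AA \<alpha> t * (-1)^k - poly g (lam \<alpha> t k)"
      unfolding q_def using GG_lam a that by (simp add: poly_GP)
    then have "(-1)^k * poly q (lam \<alpha> t k) = AA \<alpha> t - (-1)^k * poly g (lam \<alpha> t k)"
      by (rule sgn_aux) simp
    moreover have "(-1)^k * poly g (lam \<alpha> t k) < AA \<alpha> t"
      using gb[OF r] by (cases "even k") auto
    ultimately show ?thesis by simp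
  qed
  have "\<forall>k. \<exists>z. Suc k < t \<longrightarrow> lam \<alpha> t (Suc k) < z \<and> z < lam \<alpha> t k \<and> poly q z = 0"
  proof (intro allI impI)
    fix k
    show "\<exists>z. Suc k < t \<longrightarrow> lam \<alpha> t (Suc k) < z \<and> z < lam \<alpha> t k \<and> poly q z = 0"
    proof (cases "Suc k < t")
      case True
      have lt: "lam \<alpha> t (Suc k) < lam \<alpha> t k" using lam_mono a True by auto
      have s1: "0 < (-1)^k * poly q (lam \<alpha> t k)" by (rule sgn) (use True in simp)
      have s2: "0 < (-1)^(Suc k) * poly q (lam \<alpha> t (Suc k))" by (rule sgn) (use True in simp)
      have "poly q (lam \<alpha> t (Suc k)) * poly q (lam \<alpha> t k) < 0"
      proof (cases "even k")
        case True
        then have "0 < poly q (lam \<alpha> t k)" "poly q (lam \<alpha> t (Suc k)) < 0" using s1 s2 by simp_all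
        then show ?thesis by (simp add: mult_neg_pos)
      next
        case False
        then have "poly q (lam \<alpha> t k) < 0" "0 < poly q (lam \<alpha> t (Suc k))" using s1 s2 by simp_all
        then show ?thesis by (simp add: mult_pos_neg)
      qed
      then show ?thesis using poly_IVT[OF lt] True by blast
    qed auto
  qed
  then obtain z where z: "\<And>k. Suc k < t \<Longrightarrow> lam \<alpha> t (Suc k) < z k \<and> z k < lam \<alpha> t k \<and> poly q (z k) = 0"
    by metis
  have zpos: "0 < z k" "z k < \<beta>" if "Suc k < t" for k
  proof -
    have "0 \<le> lam \<alpha> t (Suc k)" "lam \<alpha> t k \<le> \<alpha>" using lam_range a that by auto
    then show "0 < z k" "z k < \<beta>" using z[OF that] a by auto
  qed
  have zinj: "inj_on z {..<t-1}"
  proof (rule inj_onI)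
    fix j k assume j: "j \<in> {..<t-1}" and k: "k \<in> {..<t-1}" and e: "z j = z k"
    show "j = k"
    proof (rule ccontr)
      assume "j \<noteq> k"
      then consider "j < k" | "k < j" by linarith
      then show False
      proof cases
        case 1
        have "z k < lam \<alpha> t k" using z k by auto
        also have "lam \<alpha> t k \<le> lam \<alpha> t (Suc j)"
        proof (cases "Suc j = k")
          case False
          then have "Suc j < k" using 1 by simp
          moreover have "k < t" using k by simp
          ultimately show ?thesis using a lam_mono[of \<alpha> t "Suc j" k] by simp
        qed simp
        also have "\<dots> < z j" using z j by auto
        finally show False using e by simp
      next
        case 2
        have "z j < lam \<alpha> t j" using z j by auto
        also have "lam \<alpha> t j \<le> lam \<alpha> t (Suc k)"
        proof (cases "Suc k = j")
          case False
          then have "Suc k < j" using 2 by simp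
          moreover have "j < t" using j by simp
          ultimately show ?thesis using a lam_mono[of \<alpha> t "Suc k" j] by simp
        qed simp
        also have "\<dots> < z k" using z k by auto
        finally show False using e by simp
      qed
    qed
  qed
  define R where "R = insert 0 (insert \<beta> (z ` {..<t-1}))"
  have cardR: "card R = t + 1"
  proof -
    have zr: "0 < z k \<and> z k < \<beta>" if "k \<in> {..<t-1}" for k
    proof -
      have "Suc k < t" using that by auto
      then show ?thesis using zpos by blast
    qed
    have "0 \<notin> insert \<beta> (z ` {..<t-1})" using zr a by force
    moreover have "\<beta> \<notin> z ` {..<t-1}" using zr by force
    ultimately show ?thesis unfolding R_def using zinj a
      by (simp add: card_image)
  qed
  have qnz: "q \<noteq> 0" using sgn[of 0] a by auto
  have Rsub: "R \<subseteq> {x. poly q x = 0}" unfolding R_def using q0 qb z by auto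
  have "card R \<le> card {x. poly q x = 0}"
    using Rsub poly_roots_finite[OF qnz] by (rule card_mono[rotated])
  also have "\<dots> \<le> degree q" by (rule card_poly_roots_bound[OF qnz])
  also have "\<dots> \<le> t" unfolding q_def g_def
    using degree_GP[of \<alpha> t] dp degree_smult_le[of "GG \<alpha> t \<beta> / poly p \<beta>" p]
    by (meson degree_diff_le le_trans)
  finally show False using cardR by simp
qed


lemma poly_fstar:
  assumes "0 < \<alpha>" "\<alpha> < 1" "1 \<le> t"
  shows "poly (fstar \<alpha> t) l = GG \<alpha> t l / (\<Prod>s<t. (1 - cheb_root \<alpha> s t))"
proof -
  have "poly (fstar \<alpha> t) l = (\<Prod>s<t. (l - cheb_root \<alpha> s t) / (1 - cheb_root \<alpha> s t))"
    unfolding fstar_def poly_prod by (intro prod.cong) (auto simp: diff_divide_distrib)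
  also have "\<dots> = GG \<alpha> t l / (\<Prod>s<t. (1 - cheb_root \<alpha> s t))"
    unfolding GG_def by (rule prod_dividef)
  finally show ?thesis .
qed

lemma C_pos:
  assumes "0 < \<alpha>" "\<alpha> < 1" "1 \<le> t"
  shows "0 < (\<Prod>s<t. (1 - cheb_root \<alpha> s t))"
proof (intro prod_pos)
  fix s have "cheb_root \<alpha> s t \<le> \<alpha>" by (rule root_le) (use assms in auto)
  then show "0 < 1 - cheb_root \<alpha> s t" using assms by linarith
qed

theorem theorem1:
  fixes \<alpha> \<beta> :: real and t :: nat
  assumes "0 < \<alpha>" and "\<alpha> < \<beta>" and "\<beta> < 1" and "1 \<le> t"
  shows "fstar \<alpha> t \<in> Pt' t \<and> (\<forall>f \<in> Pt' t. ratio_obj \<alpha> \<beta> (fstar \<alpha> t) \<le> ratio_obj \<alpha> \<beta> f)"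
proof -
  have a1: "\<alpha> < 1" using assms by simp
  define C where "C = (\<Prod>s<t. (1 - cheb_root \<alpha> s t))"
  have Cp: "0 < C" unfolding C_def using C_pos[OF assms(1) a1 assms(4)] .
  have pf: "poly (fstar \<alpha> t) l = GG \<alpha> t l / C" for l
    unfolding C_def using poly_fstar[OF assms(1) a1 assms(4)] .
  have A: "0 < AA \<alpha> t" using AA_pos assms by auto
  have Gb: "0 < GG \<alpha> t \<beta>" using GG_pos assms by auto
  have GA: "GG \<alpha> t \<alpha> = AA \<alpha> t" using GG_lam[of \<alpha> t 0] lam0[of t] assms by simp
  have deg: "degree (fstar \<alpha> t) \<le> t"
  proof -
    have gen: "degree (\<Prod>s<t. h s) \<le> (\<Sum>s<t. degree (h s))" for h :: "nat \<Rightarrow> real poly"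
      using degree_prod_sum_le[of "{..<t}" h] by (simp add: o_def)
    have hd: "degree (smult (1 / (1 - cheb_root \<alpha> s t)) [:- cheb_root \<alpha> s t, 1:]) \<le> 1" for s
      by (rule order_trans[OF degree_smult_le]) simp
    have "degree (fstar \<alpha> t) \<le> (\<Sum>s<t. degree (smult (1 / (1 - cheb_root \<alpha> s t)) [:- cheb_root \<alpha> s t, 1:]))"
      unfolding fstar_def by (rule gen)
    also have "\<dots> \<le> (\<Sum>s<t. 1)" by (intro sum_mono hd)
    finally show ?thesis by simp
  qed
  have G1: "GG \<alpha> t 1 = C" unfolding GG_def C_def ..
  have inP: "fstar \<alpha> t \<in> Pt' t"
    unfolding Pt'_def using deg pf GG_zero[OF assms(4)] G1 Cp by simp
  have sup_f: "Sup ((\<lambda>x. \<bar>poly (fstar \<alpha> t) x\<bar>) ` {0..\<alpha>}) = AA \<alpha> t / C"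
  proof (rule cSup_eq_maximum)
    show "AA \<alpha> t / C \<in> (\<lambda>x. \<bar>poly (fstar \<alpha> t) x\<bar>) ` {0..\<alpha>}"
      using GA pf A Cp assms(1) by (intro image_eqI[of _ _ \<alpha>]) auto
    fix y assume "y \<in> (\<lambda>x. \<bar>poly (fstar \<alpha> t) x\<bar>) ` {0..\<alpha>}"
    then obtain x where x: "x \<in> {0..\<alpha>}" "y = \<bar>poly (fstar \<alpha> t) x\<bar>" by auto
    have "\<bar>GG \<alpha> t x\<bar> \<le> AA \<alpha> t" using GG_bound assms x by auto
    then show "y \<le> AA \<alpha> t / C" using x pf Cp by (simp add: divide_right_mono)
  qed
  have inf_f: "Inf ((\<lambda>x. \<bar>poly (fstar \<alpha> t) x\<bar>) ` {\<beta>..1}) = GG \<alpha> t \<beta> / C"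
  proof (rule cInf_eq_minimum)
    show "GG \<alpha> t \<beta> / C \<in> (\<lambda>x. \<bar>poly (fstar \<alpha> t) x\<bar>) ` {\<beta>..1}"
      using pf Gb Cp assms by (intro image_eqI[of _ _ \<beta>]) auto
    fix y assume "y \<in> (\<lambda>x. \<bar>poly (fstar \<alpha> t) x\<bar>) ` {\<beta>..1}"
    then obtain x where x: "x \<in> {\<beta>..1}" "y = \<bar>poly (fstar \<alpha> t) x\<bar>" by auto
    have "GG \<alpha> t \<beta> \<le> GG \<alpha> t x" using GG_mono[of \<alpha> t \<beta> x] assms x by auto
    then show "GG \<alpha> t \<beta> / C \<le> y" using x pf Cp Gb by (simp add: divide_right_mono)
  qed
  have rf: "ratio_obj \<alpha> \<beta> (fstar \<alpha> t) = ereal (AA \<alpha> t / GG \<alpha> t \<beta>)"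
    unfolding ratio_obj_def Let_def sup_f inf_f using Gb Cp by simp
  have "ratio_obj \<alpha> \<beta> (fstar \<alpha> t) \<le> ratio_obj \<alpha> \<beta> f" if f: "f \<in> Pt' t" for f
  proof -
    define M where "M = Sup ((\<lambda>x. \<bar>poly f x\<bar>) ` {0..\<alpha>})"
    define m where "m = Inf ((\<lambda>x. \<bar>poly f x\<bar>) ` {\<beta>..1})"
    have df: "degree f \<le> t" and f0: "poly f 0 = 0" using f unfolding Pt'_def by auto
    show ?thesis
    proof (cases "m = 0")
      case True
      then show ?thesis unfolding ratio_obj_def Let_def m_def[symmetric] by simp
    next
      case False
      have cpt: "compact ((\<lambda>x. \<bar>poly f x\<bar>) ` {0..\<alpha>})"
        by (intro compact_continuous_image continuous_intros) auto
      have bda: "bdd_above ((\<lambda>x. \<bar>poly f x\<bar>) ` {0..\<alpha>})"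
        using cpt by (simp add: bounded_imp_bdd_above compact_imp_bounded)
      have Mb: "\<forall>x\<in>{0..\<alpha>}. \<bar>poly f x\<bar> \<le> M"
        unfolding M_def using bda by (auto intro: cSup_upper)
      have M0: "0 \<le> M" using Mb assms(1) f0 by force
      have bdb: "bdd_below ((\<lambda>x. \<bar>poly f x\<bar>) ` {\<beta>..1})"
        by (rule bdd_belowI[of _ 0]) auto
      have m0: "0 \<le> m" unfolding m_def using assms
        by (intro cInf_greatest) auto
      have mb: "m \<le> \<bar>poly f \<beta>\<bar>" unfolding m_def using bdb assms
        by (intro cInf_lower) auto
      have mp: "0 < m" using m0 False by simp
      have fb: "0 < \<bar>poly f \<beta>\<bar>" using mp mb by simp
      have k: "\<bar>poly f \<beta>\<bar> * AA \<alpha> t \<le> M * GG \<alpha> t \<beta>"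
        using key[OF assms(1,2,4) df f0 Mb] .
      have "AA \<alpha> t / GG \<alpha> t \<beta> \<le> M / \<bar>poly f \<beta>\<bar>"
        using k Gb fb by (simp add: divide_le_eq le_divide_eq mult.commute)
      also have "\<dots> \<le> M / m" using M0 mp mb by (intro divide_left_mono) auto
      finally have "AA \<alpha> t / GG \<alpha> t \<beta> \<le> M / m" .
      moreover have "ratio_obj \<alpha> \<beta> f = ereal (M / m)"
        unfolding ratio_obj_def Let_def M_def[symmetric] m_def[symmetric] using False by simp
      ultimately show ?thesis unfolding rf by simp
    qed
  qed
  then show ?thesis using inP by blast
qed

end
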